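(* Let $\mathcal F$ be a Hilbert space with norm-induced metric $d$, $(\phi_i)_{i\in\mathbb N}\subset\mathcal F$, $\pi:\mathbb N\to\mathbb N$ of at most polynomial growth, and $\Sigma^\pi_M=\{\sum_{i\in I}c_i\phi_i:I\subset\{1,\dots,\pi(M)\},|I|\le M,(c_i)\in\mathbb R^I\}$. For $\alpha,\beta>0$ let $$\mathcal A^\alpha(\mathcal F,\Sigma^\pi,\beta)=\{f\in\mathcal F:\|f\|\le\beta\ \text{and}\ \sup_{M\ge1}M^\alpha d(f,\Sigma^\pi_M)\le\beta\},$$ where $d(f,A)=\inf_{g\in A}d(f,g)$. Then $\gamma^*_e(\mathcal A^\alpha(\mathcal F,\Sigma^\pi,\beta))\ge\alpha$.
   Context: A finite $X\subset\mathcal C$ is an $\varepsilon$-covering of $\mathcal C$ if every point of $\mathcal C$ is within distance $\varepsilon$ of some point of $X$; $N(\mathcal C,d,\varepsilon)$ is the minimal size of such a covering ($+\infty$ if none), $H=\log_2N$, and the encoding speed is $\gamma^*_e(\mathcal C)=\sup\{\gamma>0:H(\mathcal C,d,\varepsilon)=O(\varepsilon^{-1/\gamma})\text{ as }\varepsilon\to0\}$ ($0$ if the set is empty). *)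

theory Defs
  imports "HOL-Analysis.Analysis" "HOL-Library.Landau_Symbols" "HOL-Library.Extended_Nat"
begin

definition is_covering :: "'a::metric_space set \<Rightarrow> real \<Rightarrow> 'a set \<Rightarrow> bool" where
  "is_covering C eps X \<longleftrightarrow> finite X \<and> X \<subseteq> C \<and> (\<forall>x\<in>C. \<exists>y\<in>X. dist x y \<le> eps)"

text \<open>Covering number N(C,d,eps); infinity if no finite covering exists.\<close>
definition covering_number :: "'a::metric_space set \<Rightarrow> real \<Rightarrow> enat" where
  "covering_number C eps = Inf {enat (card X) | X. is_covering C eps X}"

text \<open>H(C,d,eps) = O(eps^(-1/gamma)) as eps -> 0 (H is infinite when N is; then the bound fails).\<close>
definition entropy_bound :: "'a::metric_space set \<Rightarrow> real \<Rightarrow> bool" where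
  "entropy_bound C gamma \<longleftrightarrow>
     eventually (\<lambda>eps. covering_number C eps \<noteq> \<infinity>) (at_right 0) \<and>
     (\<lambda>eps. log 2 (real (the_enat (covering_number C eps))))
        \<in> O[at_right 0](\<lambda>eps. eps powr (-1 / gamma))"

definition encoding_speed :: "'a::metric_space set \<Rightarrow> ereal" where
  "encoding_speed C = (if C = {} then 0
     else Sup {ereal gamma | gamma. gamma > 0 \<and> entropy_bound C gamma})"

definition Sigma_pi :: "(nat \<Rightarrow> 'a::real_vector) \<Rightarrow> (nat \<Rightarrow> nat) \<Rightarrow> nat \<Rightarrow> 'a set" where
  "Sigma_pi phi p M = {g. \<exists>I c. I \<subseteq> {1..p M} \<and> card I \<le> M \<and> g = (\<Sum>i\<in>I. c i *\<^sub>R phi i)}"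

definition approx_class :: "real \<Rightarrow> (nat \<Rightarrow> 'a::real_normed_vector) \<Rightarrow> (nat \<Rightarrow> nat) \<Rightarrow> real \<Rightarrow> 'a set" where
  "approx_class alpha phi p beta =
     {f. norm f \<le> beta \<and> (\<forall>M\<ge>1. real M powr alpha * infdist f (Sigma_pi phi p M) \<le> beta)}"

end

theory Submission imports Defs begin

lemma gs_exists:
  fixes S :: "'a::real_inner set"
  assumes "finite S"
  shows "\<exists>B. finite B \<and> card B \<le> card S \<and> (\<forall>b\<in>B. norm b = 1) \<and> pairwise orthogonal B \<and> S \<subseteq> span B"
  using assms
proof (induction S rule: finite_induct)
  case empty
  show ?case by (rule exI[of _ "{}"]) auto
next
  case (insert a S)
  then obtain B where B: "finite B" "card B \<le> card S" "\<forall>b\<in>B. norm b = 1"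
    "pairwise orthogonal B" "S \<subseteq> span B" by blast
  define w where "w = a - (\<Sum>b\<in>B. (a \<bullet> b) *\<^sub>R b)"
  have inB: "b \<bullet> b' = (if b = b' then 1 else 0)" if "b \<in> B" "b' \<in> B" for b b'
    using B(3,4) that by (auto simp: pairwise_def orthogonal_def norm_eq_1)
  have worth: "w \<bullet> b = 0" if "b \<in> B" for b
  proof -
    have "(\<Sum>b'\<in>B. (a \<bullet> b') *\<^sub>R b') \<bullet> b = (\<Sum>b'\<in>B. (a \<bullet> b') * (b' \<bullet> b))"
      by (simp add: inner_sum_left)
    also have "\<dots> = (\<Sum>b'\<in>B. if b' = b then a \<bullet> b else 0)"
      by (rule sum.cong) (auto simp: inB that)
    also have "\<dots> = a \<bullet> b" using B(1) that by simp
    finally show ?thesis by (simp add: w_def inner_diff_left)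
  qed
  have aw: "a = w + (\<Sum>b\<in>B. (a \<bullet> b) *\<^sub>R b)" by (simp add: w_def)
  show ?case
  proof (cases "w = 0")
    case True
    have "(\<Sum>b\<in>B. (a \<bullet> b) *\<^sub>R b) \<in> span B"
      by (intro span_sum span_mul span_base) auto
    then have "a \<in> span B" using aw True by simp
    then show ?thesis using B insert by (intro exI[of _ B]) auto
  next
    case False
    define u where "u = w /\<^sub>R norm w"
    have nu: "norm u = 1" using False by (simp add: u_def)
    have ub: "u \<bullet> b = 0" if "b \<in> B" for b using worth[OF that] by (simp add: u_def)
    have unB: "u \<notin> B" using ub nu by (metis inner_eq_zero_iff norm_zero zero_neq_one)
    have "w \<in> span (insert u B)"
    proof -
      have "w = norm w *\<^sub>R u" using False by (simp add: u_def)
      then show ?thesis by (metis insertI1 span_base span_mul)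
    qed
    moreover have "(\<Sum>b\<in>B. (a \<bullet> b) *\<^sub>R b) \<in> span (insert u B)"
      by (intro span_sum span_mul span_base) auto
    ultimately have "a \<in> span (insert u B)" using aw by (metis span_add)
    moreover have "S \<subseteq> span (insert u B)" using B(5) span_mono[of B "insert u B"] by auto
    moreover have "pairwise orthogonal (insert u B)"
      using B(4) ub by (auto simp: pairwise_insert orthogonal_def inner_commute)
    moreover have "card (insert u B) \<le> card (insert a S)"
      using B(1,2) insert(1,2) unB by simp
    ultimately show ?thesis using B(1,3) nu by (intro exI[of _ "insert u B"]) auto
  qed
qed

lemma norm_sum_orthonormal:
  fixes B :: "'a::real_inner set"
  assumes "finite B" "\<forall>b\<in>B. norm b = 1" "pairwise orthogonal B"
  shows "(norm (\<Sum>b\<in>B. a b *\<^sub>R b))^2 = (\<Sum>b\<in>B. (a b)^2)"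
proof -
  have inB: "b \<bullet> b' = (if b = b' then 1 else 0)" if "b \<in> B" "b' \<in> B" for b b'
    using assms(2,3) that by (auto simp: pairwise_def orthogonal_def norm_eq_1)
  have "(norm (\<Sum>b\<in>B. a b *\<^sub>R b))^2 = (\<Sum>b\<in>B. \<Sum>b'\<in>B. a b * a b' * (b \<bullet> b'))"
    by (simp add: power2_norm_eq_inner inner_sum_left inner_sum_right sum_distrib_left mult.assoc inner_commute mult.left_commute)
  also have "\<dots> = (\<Sum>b\<in>B. \<Sum>b'\<in>B. if b' = b then a b * a b else 0)"
    by (intro sum.cong refl) (auto simp: inB)
  also have "\<dots> = (\<Sum>b\<in>B. (a b)^2)" using assms(1) by (simp add: power2_eq_square)
  finally show ?thesis .
qed

lemma card_small_subsets:
  "card {I. I \<subseteq> {1..n::nat} \<and> card I \<le> M} \<le> (n+1)^M"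
proof -
  let ?L = "{xs. set xs \<subseteq> {0..n} \<and> length xs = M}"
  have "{I. I \<subseteq> {1..n::nat} \<and> card I \<le> M} \<subseteq> (\<lambda>xs. set xs - {0}) ` ?L"
  proof
    fix I assume I: "I \<in> {I. I \<subseteq> {1..n::nat} \<and> card I \<le> M}"
    then have fin: "finite I" using finite_subset by blast
    define xs where "xs = sorted_list_of_set I @ replicate (M - card I) 0"
    have "length xs = M" using I fin by (simp add: xs_def)
    moreover have "set xs \<subseteq> {0..n}" using I fin by (auto simp: xs_def)
    moreover have "set xs - {0} = I" using I fin by (auto simp: xs_def)
    ultimately show "I \<in> (\<lambda>xs. set xs - {0}) ` ?L" by force
  qed
  then have "card {I. I \<subseteq> {1..n::nat} \<and> card I \<le> M} \<le> card ((\<lambda>xs. set xs - {0}) ` ?L)"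
    by (intro card_mono finite_imageI) (auto simp: finite_lists_length_eq)
  also have "\<dots> \<le> card ?L" by (intro card_image_le) (auto simp: finite_lists_length_eq)
  also have "\<dots> = (n+1)^M" by (simp add: card_lists_length_eq)
  finally show ?thesis .
qed

lemma ext_to_int_cover:
  fixes C :: "'a::metric_space set"
  assumes "finite Y" "\<forall>x\<in>C. \<exists>y\<in>Y. dist x y \<le> e/2"
  shows "\<exists>X. is_covering C e X \<and> card X \<le> card Y"
proof -
  define Y' where "Y' = {y\<in>Y. \<exists>x\<in>C. dist x y \<le> e/2}"
  define s where "s y = (SOME x. x \<in> C \<and> dist x y \<le> e/2)" for y
  have s: "s y \<in> C \<and> dist (s y) y \<le> e/2" if "y \<in> Y'" for y
    unfolding s_def by (rule someI_ex) (use that Y'_def in auto)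
  define X where "X = s ` Y'"
  have fY': "finite Y'" using assms(1) by (simp add: Y'_def)
  have "is_covering C e X"
    unfolding is_covering_def
  proof (intro conjI ballI)
    show "finite X" using fY' by (simp add: X_def)
    show "X \<subseteq> C" using s by (auto simp: X_def)
    fix x assume x: "x \<in> C"
    then obtain y where y: "y \<in> Y" "dist x y \<le> e/2" using assms(2) by blast
    then have yY: "y \<in> Y'" using x by (auto simp: Y'_def)
    have "dist x (s y) \<le> dist x y + dist (s y) y" by (simp add: dist_triangle2)
    also have "\<dots> \<le> e" using s[OF yY] y by simp
    finally show "\<exists>z\<in>X. dist x z \<le> e" using yY by (auto simp: X_def)
  qed
  moreover have "card X \<le> card Y"
    unfolding X_def using card_image_le[OF fY', of s] card_mono[OF assms(1), of Y'] by (auto simp: Y'_def)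
  ultimately show ?thesis by blast
qed


lemma grid_approx:
  fixes B :: "'a::real_inner set"
  assumes B: "finite B" "\<forall>b\<in>B. norm b = 1" "pairwise orthogonal B"
    and x: "x \<in> span B" "norm x \<le> R" and d: "\<delta> > 0"
  shows "\<exists>k \<in> B \<rightarrow>\<^sub>E {-\<lceil>R/\<delta>\<rceil>..\<lceil>R/\<delta>\<rceil>}.
           (norm (x - (\<Sum>b\<in>B. (\<delta> * of_int (k b)) *\<^sub>R b)))^2 \<le> real (card B) * \<delta>^2"
proof -
  define k where "k = restrict (\<lambda>b. \<lfloor>(x \<bullet> b)/\<delta>\<rfloor>) B"
  have xb: "\<bar>x \<bullet> b\<bar> \<le> R" if "b \<in> B" for b
    using Cauchy_Schwarz_ineq2[of x b] B(2) that x(2) by auto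
  have kin: "k \<in> B \<rightarrow>\<^sub>E {-\<lceil>R/\<delta>\<rceil>..\<lceil>R/\<delta>\<rceil>}"
  proof
    fix b assume b: "b \<in> B"
    have "(x \<bullet> b)/\<delta> \<le> R/\<delta>" "-(R/\<delta>) \<le> (x \<bullet> b)/\<delta>"
      using xb[OF b] d by (auto simp: abs_le_iff field_simps)
    then have "\<lfloor>(x \<bullet> b)/\<delta>\<rfloor> \<le> \<lceil>R/\<delta>\<rceil>" "- \<lceil>R/\<delta>\<rceil> \<le> \<lfloor>(x \<bullet> b)/\<delta>\<rfloor>"
      by (meson ceiling_le_iff floor_le_ceiling le_floor_iff order_trans le_of_int_ceiling,
          metis ceiling_def floor_mono minus_minus)
    then show "k b \<in> {-\<lceil>R/\<delta>\<rceil>..\<lceil>R/\<delta>\<rceil>}" using b by (simp add: k_def)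
  qed (simp add: k_def)
  have exp: "(\<Sum>b\<in>B. (x \<bullet> b) *\<^sub>R b) = x"
    using orthonormal_basis_expand[OF B(3) _ x(1) B(1)] B(2) by blast
  have "x - (\<Sum>b\<in>B. (\<delta> * of_int (k b)) *\<^sub>R b) = (\<Sum>b\<in>B. (x \<bullet> b - \<delta> * of_int (k b)) *\<^sub>R b)"
    by (subst (1) exp[symmetric]) (simp add: sum_subtractf scaleR_diff_left)
  then have "(norm (x - (\<Sum>b\<in>B. (\<delta> * of_int (k b)) *\<^sub>R b)))^2 = (\<Sum>b\<in>B. (x \<bullet> b - \<delta> * of_int (k b))^2)"
    using norm_sum_orthonormal[OF B] by simp
  also have "\<dots> \<le> (\<Sum>b\<in>B. \<delta>^2)"
  proof (rule sum_mono)
    fix b assume b: "b \<in> B"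
    have "of_int \<lfloor>(x \<bullet> b)/\<delta>\<rfloor> \<le> (x \<bullet> b)/\<delta>" "(x \<bullet> b)/\<delta> < of_int \<lfloor>(x \<bullet> b)/\<delta>\<rfloor> + 1"
      by linarith+
    then have "\<delta> * of_int \<lfloor>(x \<bullet> b)/\<delta>\<rfloor> \<le> \<delta> * ((x \<bullet> b)/\<delta>)" "\<delta> * ((x \<bullet> b)/\<delta>) < \<delta> * (of_int \<lfloor>(x \<bullet> b)/\<delta>\<rfloor> + 1)"
      using d by (intro mult_left_mono mult_strict_left_mono; simp)+
    then have "\<delta> * of_int \<lfloor>(x \<bullet> b)/\<delta>\<rfloor> \<le> x \<bullet> b" "x \<bullet> b < \<delta> * of_int \<lfloor>(x \<bullet> b)/\<delta>\<rfloor> + \<delta>"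
      using d by (simp_all add: distrib_left)
    then have "0 \<le> x \<bullet> b - \<delta> * of_int (k b)" "x \<bullet> b - \<delta> * of_int (k b) \<le> \<delta>"
      using b by (auto simp: k_def)
    then show "(x \<bullet> b - \<delta> * of_int (k b))^2 \<le> \<delta>^2" by (intro power_mono) auto
  qed
  also have "\<dots> = real (card B) * \<delta>^2" by simp
  finally show ?thesis using kin by blast
qed


lemma cover_at:
  fixes phi :: "nat \<Rightarrow> 'a::real_inner"
  assumes a: "alpha > 0" and b: "beta > 0" and e: "0 < eps" "eps \<le> 1"
    and M: "M \<ge> 1" and Mb: "beta \<le> eps/8 * real M powr alpha"
  shows "\<exists>X. is_covering (approx_class alpha phi p beta) eps X \<and>
     card X \<le> (p M + 1)^M * nat (2 * \<lceil>(beta+1)/(eps/(4*M))\<rceil> + 1)^M"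
proof -
  define \<delta> where "\<delta> = eps/(4*M)"
  define R where "R = beta + 1"
  define K where "K = \<lceil>R/\<delta>\<rceil>"
  have dpos: "\<delta> > 0" using e M by (simp add: \<delta>_def)
  have "R/\<delta> > 0" using dpos b by (simp add: R_def)
  then have K0: "K \<ge> 0" by (simp add: K_def)
  define Subs where "Subs = {I. I \<subseteq> {1..p M} \<and> card I \<le> M}"
  define ONB where "ONB I = (SOME B. finite B \<and> card B \<le> card (phi ` I) \<and> (\<forall>b\<in>B. norm b = 1)
      \<and> pairwise orthogonal B \<and> phi ` I \<subseteq> span B)" for I
  have ONB: "finite (ONB I) \<and> card (ONB I) \<le> card (phi ` I) \<and> (\<forall>b\<in>ONB I. norm b = 1)
      \<and> pairwise orthogonal (ONB I) \<and> phi ` I \<subseteq> span (ONB I)" if "finite I" for I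
    unfolding ONB_def by (rule someI_ex) (use gs_exists[of "phi ` I"] that in blast)
  define grid where "grid I = (\<lambda>k. \<Sum>b\<in>ONB I. (\<delta> * of_int (k b)) *\<^sub>R b) ` (ONB I \<rightarrow>\<^sub>E {-K..K})" for I
  define Y where "Y = (\<Union>I\<in>Subs. grid I)"
  have finSubs: "finite Subs"
    by (rule finite_subset[of _ "Pow {1..p M}"]) (auto simp: Subs_def)
  have finI: "finite I" if "I \<in> Subs" for I
    using that finite_subset[of I "{1..p M}"] by (auto simp: Subs_def)
  have cardgrid: "card (grid I) \<le> nat (2*K+1)^M" if "I \<in> Subs" for I
  proof -
    have "card (grid I) \<le> card (ONB I \<rightarrow>\<^sub>E {-K..K})" unfolding grid_def
      by (rule card_image_le) (use ONB[OF finI[OF that]] in \<open>auto intro: finite_PiE\<close>)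
    also have "\<dots> = nat (2*K+1) ^ card (ONB I)"
      using ONB[OF finI[OF that]] by (simp add: card_PiE)
    also have "\<dots> \<le> nat (2*K+1)^M"
    proof (rule power_increasing)
      have "card (ONB I) \<le> card (phi ` I)" using ONB[OF finI[OF that]] by blast
      also have "\<dots> \<le> card I" by (rule card_image_le[OF finI[OF that]])
      also have "\<dots> \<le> M" using that by (simp add: Subs_def)
      finally show "card (ONB I) \<le> M" .
      show "1 \<le> nat (2*K+1)" using K0 by simp
    qed
    finally show ?thesis .
  qed
  have finY: "finite Y" unfolding Y_def grid_def
    using finSubs ONB finI by (auto intro!: finite_PiE)
  have "card Y \<le> (\<Sum>I\<in>Subs. card (grid I))" unfolding Y_def by (rule card_UN_le[OF finSubs])
  also have "\<dots> \<le> (\<Sum>I\<in>Subs. nat (2*K+1)^M)" by (rule sum_mono) (rule cardgrid)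
  also have "\<dots> = card Subs * nat (2*K+1)^M" by simp
  also have "\<dots> \<le> (p M + 1)^M * nat (2*K+1)^M"
    by (rule mult_right_mono) (use card_small_subsets[of "p M" M] in \<open>simp_all add: Subs_def\<close>)
  finally have cardY: "card Y \<le> (p M + 1)^M * nat (2*K+1)^M" .
  have cov: "\<exists>y\<in>Y. dist f y \<le> eps/2" if f: "f \<in> approx_class alpha phi p beta" for f
  proof -
    have fn: "norm f \<le> beta" and fd: "real M powr alpha * infdist f (Sigma_pi phi p M) \<le> beta"
      using f M by (auto simp: approx_class_def)
    have Mpos: "real M powr alpha > 0" using M by simp
    have "real M powr alpha * infdist f (Sigma_pi phi p M) \<le> real M powr alpha * (eps/8)"
      using fd Mb by (simp add: mult.commute)
    then have idl: "infdist f (Sigma_pi phi p M) \<le> eps/8" using Mpos by simp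
    have zS: "0 \<in> Sigma_pi phi p M" unfolding Sigma_pi_def
      by (rule CollectI, rule exI[of _ "{}"]) auto
    then have ne: "Sigma_pi phi p M \<noteq> {}" by blast
    have "(INF a\<in>Sigma_pi phi p M. dist f a) < eps/4"
      using idl e infdist_notempty[OF ne, of f] by simp
    moreover have "bdd_below (dist f ` Sigma_pi phi p M)" by (rule bdd_belowI[of _ 0]) auto
    ultimately obtain g where g: "g \<in> Sigma_pi phi p M" "dist f g < eps/4"
      using cINF_less_iff[OF ne, of "dist f"] by blast
    then obtain I c where I: "I \<subseteq> {1..p M}" "card I \<le> M" "g = (\<Sum>i\<in>I. c i *\<^sub>R phi i)"
      by (auto simp: Sigma_pi_def)
    have IS: "I \<in> Subs" using I by (simp add: Subs_def)
    note O = ONB[OF finI[OF IS]]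
    have gspan: "g \<in> span (ONB I)" unfolding I(3)
      by (intro span_sum span_mul) (use O in auto)
    have gn: "norm g \<le> R"
    proof -
      have "norm g \<le> norm f + dist f g"
        by (metis dist_norm norm_triangle_sub add.commute norm_minus_commute)
      then show ?thesis using fn g(2) e by (simp add: R_def)
    qed
    obtain k where k: "k \<in> ONB I \<rightarrow>\<^sub>E {-K..K}"
      and kb: "(norm (g - (\<Sum>b\<in>ONB I. (\<delta> * of_int (k b)) *\<^sub>R b)))^2 \<le> real (card (ONB I)) * \<delta>^2"
      using grid_approx[of "ONB I" g R \<delta>] O gspan gn dpos by (auto simp: K_def)
    define h where "h = (\<Sum>b\<in>ONB I. (\<delta> * of_int (k b)) *\<^sub>R b)"
    have hY: "h \<in> Y" using IS k by (auto simp: Y_def grid_def h_def)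
    have cB: "card (ONB I) \<le> M"
      using O card_image_le[OF finI[OF IS], of phi] I(2) by linarith
    have "real (card (ONB I)) * \<delta>^2 \<le> real M * \<delta>^2"
      using cB by (intro mult_right_mono) auto
    also have "\<dots> = eps^2 / (16 * real M)" using M by (simp add: \<delta>_def power2_eq_square field_simps)
    also have "\<dots> \<le> eps^2/16"
    proof -
      have "eps^2 * 1 \<le> eps^2 * real M" using M by (intro mult_left_mono) auto
      moreover have "real M > 0" using M by simp
      ultimately show ?thesis by (simp add: divide_simps)
    qed
    also have "\<dots> = (eps/4)^2" by (simp add: power2_eq_square)
    finally have cb: "real (card (ONB I)) * \<delta>^2 \<le> (eps/4)^2" .
    have "(norm (g - h))^2 \<le> (eps/4)^2" using order_trans[OF kb cb] by (simp only: h_def)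
    then have gh: "norm (g - h) \<le> eps/4" by (rule power2_le_imp_le) (use e in simp)
    have "dist f h \<le> dist f g + dist g h" by (rule dist_triangle)
    also have "\<dots> \<le> eps/2" using g(2) gh by (simp add: dist_norm)
    finally show ?thesis using hY by blast
  qed
  obtain X where "is_covering (approx_class alpha phi p beta) eps X" "card X \<le> card Y"
    using ext_to_int_cover[OF finY, of "approx_class alpha phi p beta" eps] cov by blast
  then show ?thesis using cardY by (intro exI[of _ X]) (simp add: K_def R_def \<delta>_def)
qed


lemma M_props:
  fixes alpha beta eps :: real
  assumes a: "alpha > 0" and b: "beta > 0" and e: "0 < eps" "eps < 1"
  defines "x \<equiv> 1/eps" and "c0 \<equiv> (8*beta+1) powr (1/alpha)"
  defines "M \<equiv> nat \<lceil>c0 * x powr (1/alpha)\<rceil>"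
  shows "M \<ge> 1" "beta \<le> eps/8 * real M powr alpha" "real M \<le> (c0+1) * x powr (1/alpha)"
    "c0 \<ge> 1" "x \<ge> 1" "x powr (1/alpha) \<ge> 1"
proof -
  show x1: "x \<ge> 1" using e by (simp add: x_def)
  show A1: "x powr (1/alpha) \<ge> 1" using x1 a by (simp add: ge_one_powr_ge_zero)
  show c1: "c0 \<ge> 1" using b a by (simp add: c0_def ge_one_powr_ge_zero)
  have Mge: "real M \<ge> c0 * x powr (1/alpha)" unfolding M_def by (rule real_nat_ceiling_ge)
  have "c0 * x powr (1/alpha) \<ge> 1" using A1 c1 by (metis mult_mono' mult_1 zero_le_one)
  then show "M \<ge> 1" using Mge by simp
  have "real M < c0 * x powr (1/alpha) + 1" unfolding M_def
    using A1 c1 by (smt (verit) of_nat_nat ceiling_correct le_of_int_ceiling of_int_ceiling_le_add_one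
        mult_nonneg_nonneg zero_le_ceiling)
  then show "real M \<le> (c0+1) * x powr (1/alpha)" using A1 by (simp add: distrib_right)
  have "real M powr alpha \<ge> (c0 * x powr (1/alpha)) powr alpha"
    using Mge a c1 A1 by (intro powr_mono2) auto
  also have "(c0 * x powr (1/alpha)) powr alpha = (8*beta+1) * x"
    using a b x1 by (simp add: c0_def powr_mult powr_powr)
  finally have "(8*beta+1) * x \<le> real M powr alpha" .
  then have "eps/8 * ((8*beta+1) * x) \<le> eps/8 * real M powr alpha" using e by simp
  moreover have "eps/8 * ((8*beta+1) * x) = beta + 1/8" using e by (simp add: x_def field_simps)
  ultimately show "beta \<le> eps/8 * real M powr alpha" by simp
qed

lemma ln_le_powr: "x \<ge> 1 \<Longrightarrow> s > 0 \<Longrightarrow> ln (x::real) \<le> x powr s / s"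
proof -
  assume x: "x \<ge> 1" and s: "s > 0"
  have "ln (x powr s) \<le> x powr s - 1" using x by (intro ln_le_minus_one) simp
  then have "s * ln x \<le> x powr s" using x by simp
  then show ?thesis using s by (simp add: field_simps)
qed


lemma ln_count_bound:
  fixes eps x A c0 Cp beta u g :: real and M P k :: nat
  assumes e: "0 < eps" and x: "x = 1/eps" "x \<ge> 1" and b: "beta > 0"
    and A: "A = x powr u" "A \<ge> 1" and u: "u > 0" "u < 1/g" and g: "g > 0"
    and c0: "c0 \<ge> 1" and Cp: "Cp \<ge> 0" and M: "M \<ge> 1" "real M \<le> (c0+1) * A"
    and P: "real P \<le> Cp * real M ^ k"
  shows "ln (real ((P+1)^M * nat (2 * \<lceil>(beta+1)/(eps/(4*M))\<rceil> + 1)^M))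
     \<le> (c0+1) * (ln (Cp*(c0+1)^k+1) + ln (8*(beta+1)*(c0+1)+3) + (u*k+u+1)/(1/g-u)) * eps powr (-1/g)"
proof -
  define E1 where "E1 = Cp*(c0+1)^k+1"
  define E2 where "E2 = 8*(beta+1)*(c0+1)+3"
  define K where "K = \<lceil>(beta+1)/(eps/(4*M))\<rceil>"
  define s where "s = 1/g - u"
  define w where "w = u*k+u+1"
  have s0: "s > 0" using u by (simp add: s_def)
  have Mr: "real M > 0" using M by simp
  have E1: "E1 \<ge> 1" using Cp c0 by (simp add: E1_def)
  have E2: "E2 \<ge> 1" using b c0 by (simp add: E2_def)
  have Ak: "A^k \<ge> 1" using A(2) by (simp add: one_le_power)
  have lnx: "ln x \<ge> 0" using x by simp
  have lnA: "ln A = u * ln x" using A x by simp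
  have "real (P+1) \<le> Cp * real M ^ k + 1" using P by simp
  also have "\<dots> \<le> Cp * ((c0+1)*A)^k + 1"
    using M Cp by (intro add_right_mono mult_left_mono power_mono) auto
  also have "\<dots> \<le> E1 * A^k"
  proof -
    have "Cp * ((c0+1)*A)^k = Cp*(c0+1)^k * A^k" by (simp add: power_mult_distrib)
    moreover have "E1 * A^k = Cp*(c0+1)^k * A^k + A^k" by (simp add: E1_def distrib_right)
    ultimately show ?thesis using Ak by linarith
  qed
  finally have P1: "real (P+1) \<le> E1 * A^k" .
  have lnP: "ln (real (P+1)) \<le> ln E1 + k * u * ln x"
  proof -
    have "ln (real (P+1)) \<le> ln (E1 * A^k)" using P1 by simp
    also have "\<dots> = ln E1 + k * ln A" using E1 A(2) by (simp add: ln_mult_pos ln_realpow)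
    finally show ?thesis using lnA by simp
  qed
  have Keq: "(beta+1)/(eps/(4*M)) = 4*(beta+1)*real M*x" unfolding x(1) using e Mr by (simp add: field_simps)
  have "(beta+1)/(eps/(4*M)) > 0" using b e Mr by simp
  then have K0: "K \<ge> 0" unfolding K_def by linarith
  have "real (nat (2*K+1)) = 2 * of_int K + 1" using K0 by simp
  also have "\<dots> \<le> 2 * (4*(beta+1)*real M*x + 1) + 1"
    using Keq by (simp add: K_def) linarith
  also have "\<dots> = 8*(beta+1)*real M*x + 3" by simp
  also have "\<dots> \<le> 8*(beta+1)*((c0+1)*A)*x + 3"
    using M b x(2) by (intro add_right_mono mult_right_mono mult_left_mono) auto
  also have "\<dots> \<le> E2 * A * x"
  proof -
    have "1 * 1 \<le> A * x" using A(2) x(2) by (intro mult_mono) auto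
    then have "3 \<le> 3 * A * x" by simp
    then show ?thesis by (simp add: E2_def algebra_simps)
  qed
  finally have K1: "real (nat (2*K+1)) \<le> E2 * A * x" .
  have pos2: "real (nat (2*K+1)) > 0" using K0 by simp
  have lnK: "ln (real (nat (2*K+1))) \<le> ln E2 + u * ln x + ln x"
  proof -
    have "ln (real (nat (2*K+1))) \<le> ln (E2 * A * x)" using K1 pos2 by simp
    also have "\<dots> = ln E2 + ln A + ln x" using E2 A(2) x(2) by (simp add: ln_mult_pos)
    finally show ?thesis using lnA by simp
  qed
  have "ln (real ((P+1)^M * nat (2 * K + 1)^M)) = real M * (ln (real (P+1)) + ln (real (nat (2*K+1))))"
    using pos2 by (simp add: ln_mult_pos ln_realpow distrib_left del: of_nat_add)
  also have "\<dots> \<le> real M * (ln E1 + ln E2 + w * ln x)"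
    using lnP lnK Mr by (intro mult_left_mono) (auto simp: w_def algebra_simps)
  also have "\<dots> \<le> ((c0+1)*A) * (ln E1 + ln E2 + w * ln x)"
    using M E1 E2 lnx u by (intro mult_right_mono) (auto simp: w_def)
  also have "\<dots> \<le> ((c0+1)*A) * (ln E1 + ln E2 + w * (x powr s / s))"
    using ln_le_powr[OF x(2) s0] c0 A u by (intro mult_left_mono add_left_mono) (auto simp: w_def)
  also have "\<dots> = (c0+1) * ((ln E1 + ln E2) * A + (w/s) * (A * x powr s))"
    by (simp add: algebra_simps)
  also have "\<dots> \<le> (c0+1) * ((ln E1 + ln E2) * x powr (1/g) + (w/s) * x powr (1/g))"
  proof -
    have AX: "A * x powr s = x powr (1/g)" unfolding A(1) s_def using x(2) by (simp add: powr_add[symmetric])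
    have "A \<le> x powr (1/g)" unfolding A(1) using x(2) u by (intro powr_mono) auto
    then have "(ln E1 + ln E2) * A \<le> (ln E1 + ln E2) * x powr (1/g)"
      using E1 E2 by (intro mult_left_mono) auto
    then show ?thesis using AX c0 by (intro mult_left_mono) auto
  qed
  also have "\<dots> = (c0+1) * (ln E1 + ln E2 + w/s) * eps powr (-1/g)"
  proof -
    have "x powr (1/g) = eps powr (-1/g)" using x e by (simp add: powr_minus_divide powr_divide)
    then show ?thesis by (simp add: algebra_simps)
  qed
  finally show ?thesis by (simp add: K_def E1_def E2_def w_def s_def)
qed


lemma entropy_ok:
  fixes phi :: "nat \<Rightarrow> 'a::real_inner" and p :: "nat \<Rightarrow> nat"
  assumes pk: "\<forall>n\<ge>1. real (p n) \<le> Cp * real n ^ k" and Cp: "Cp \<ge> 0"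
    and a: "alpha > 0" and b: "beta > 0" and g: "0 < g" "g < alpha"
  shows "entropy_bound (approx_class alpha phi p beta) g"
proof -
  define C where "C = approx_class alpha phi p beta"
  define c0 where "c0 = (8*beta+1) powr (1/alpha)"
  define u where "u = 1/alpha"
  have ug: "1/alpha < 1/g" using g by (intro divide_strict_left_mono) auto
  define Kc where "Kc = (c0+1) * (ln (Cp*(c0+1)^k+1) + ln (8*(beta+1)*(c0+1)+3) + (u*k+u+1)/(1/g-u))"
  have main: "covering_number C eps \<noteq> \<infinity> \<and>
      norm (log 2 (real (the_enat (covering_number C eps)))) \<le> Kc / ln 2 * norm (eps powr (-1/g))"
    if e: "0 < eps" "eps < 1" for eps
  proof -
    define x where "x = 1/eps"
    define M where "M = nat \<lceil>c0 * x powr (1/alpha)\<rceil>"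
    note MP = M_props[OF a b e, folded x_def c0_def, folded M_def]
    define Nb where "Nb = (p M + 1)^M * nat (2 * \<lceil>(beta+1)/(eps/(4*M))\<rceil> + 1)^M"
    obtain X where X: "is_covering C eps X" "card X \<le> Nb"
      using cover_at[OF a b e(1) _ MP(1) MP(2), of phi p] e by (auto simp: C_def Nb_def)
    have "covering_number C eps \<le> enat (card X)"
      unfolding covering_number_def by (rule Inf_lower) (use X in blast)
    then obtain n where n: "covering_number C eps = enat n" "n \<le> Nb"
      using X(2) by (cases "covering_number C eps") auto
    have lnb: "ln (real Nb) \<le> Kc * eps powr (-1/g)"
      unfolding Nb_def Kc_def
      by (rule ln_count_bound[OF e(1) x_def _ b refl _ _ _ g(1) MP(4) Cp MP(1)])
         (use MP pk a g ug in \<open>auto simp: u_def x_def\<close>)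
    have "norm (log 2 (real n)) \<le> Kc / ln 2 * eps powr (-1/g)"
    proof (cases "n = 0")
      case True
      have "0 \<le> ln (real Nb)" using n by (cases "Nb = 0") auto
      then have "0 \<le> Kc * eps powr (-1/g)" using lnb by linarith
      then show ?thesis using True by (simp add: log_def divide_nonneg_pos)
    next
      case False
      have "norm (log 2 (real n)) = ln (real n) / ln 2" using False by (simp add: log_def)
      also have "\<dots> \<le> ln (real Nb) / ln 2" using False n by (intro divide_right_mono) auto
      also have "\<dots> \<le> Kc * eps powr (-1/g) / ln 2" using lnb by (intro divide_right_mono) auto
      finally show ?thesis by simp
    qed
    then show ?thesis using n e by simp
  qed
  have ev: "eventually (\<lambda>eps. covering_number C eps \<noteq> \<infinity> \<and>
      norm (log 2 (real (the_enat (covering_number C eps)))) \<le> Kc / ln 2 * norm (eps powr (-1/g))) (at_right 0)"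
    unfolding eventually_at_right_field by (rule exI[of _ 1]) (use main in auto)
  show ?thesis unfolding entropy_bound_def C_def[symmetric]
  proof
    show "\<forall>\<^sub>F eps in at_right 0. covering_number C eps \<noteq> \<infinity>" using ev by (rule eventually_mono) blast
    show "(\<lambda>eps. log 2 (real (the_enat (covering_number C eps)))) \<in> O[at_right 0](\<lambda>eps. eps powr (- 1 / g))"
      by (rule bigoI) (rule eventually_mono[OF ev], blast)
  qed
qed

theorem mainTheorem16:
  fixes phi :: "nat \<Rightarrow> 'a::{real_inner, complete_space}"
    and p :: "nat \<Rightarrow> nat" and alpha beta :: real
  assumes poly: "\<exists>C k. \<forall>n\<ge>1. real (p n) \<le> C * real n ^ k"
    and "alpha > 0" and "beta > 0"
  shows "encoding_speed (approx_class alpha phi p beta) \<ge> ereal alpha"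
proof -
  obtain Cc k where pk: "\<forall>n\<ge>1. real (p n) \<le> Cc * real n ^ k" using poly by blast
  define Cp where "Cp = max Cc 0"
  have pk': "\<forall>n\<ge>1. real (p n) \<le> Cp * real n ^ k"
  proof (intro allI impI)
    fix n :: nat assume "n \<ge> 1"
    then have "real (p n) \<le> Cc * real n ^ k" using pk by blast
    also have "\<dots> \<le> Cp * real n ^ k" by (intro mult_right_mono) (auto simp: Cp_def)
    finally show "real (p n) \<le> Cp * real n ^ k" .
  qed
  define S where "S = {ereal gamma | gamma. gamma > 0 \<and> entropy_bound (approx_class alpha phi p beta) gamma}"
  have zS: "0 \<in> Sigma_pi phi p M" for M unfolding Sigma_pi_def
    by (rule CollectI, rule exI[of _ "{}"]) auto
  have "0 \<in> approx_class alpha phi p beta"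
    using assms(3) zS by (auto simp: approx_class_def)
  then have ne: "approx_class alpha phi p beta \<noteq> {}" by blast
  have inS: "ereal gm \<le> Sup S" if "0 < gm" "gm < alpha" for gm
    by (rule Sup_upper) (use entropy_ok[OF pk' _ assms(2,3) that] that in \<open>auto simp: S_def Cp_def\<close>)
  have "ereal alpha \<le> Sup S"
  proof (rule dense_le_bounded[of 0])
    show "0 < ereal alpha" using assms(2) by simp
    fix w assume w: "0 < w" "w < ereal alpha"
    then obtain r where "w = ereal r" by (cases w) auto
    then show "w \<le> Sup S" using w inS by auto
  qed
  then show ?thesis using ne by (simp add: encoding_speed_def S_def)
qed

end
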